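(* Let $m\geqslant 2$ be an integer and let $\pi$ be an irreducible unitary cuspidal representation of $GL_m(\mathbb A_{\mathbb Q})$. For any prime $p$ such that $\pi_p$ is unramified, $$|\lambda_\pi(p^m)|+|\lambda_\pi(p^{m-1})|+\cdots+|\lambda_\pi(p)|\geqslant \frac1m.$$
   Context: To $\pi=\otimes\pi_p$ one attaches $L(s,\pi)=\prod_p\prod_{j=1}^m(1-\alpha_\pi(p,j)p^{-s})^{-1}$ for $\Re s>1$, where $\{\alpha_\pi(p,j)\}_{j=1}^m$ are the local (Satake) parameters of $\pi_p$. Writing $L(s,\pi)=\sum_{n\ge1}\lambda_\pi(n)n^{-s}$, one has $\lambda_\pi(n)=\prod_{p^\nu\| n}\sum_{\nu_1+\cdots+\nu_m=\nu}\alpha_\pi(p,1)^{\nu_1}\cdots\alpha_\pi(p,m)^{\nu_m}$. *)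

theory Defs
  imports "HOL-Analysis.Analysis" "HOL-Computational_Algebra.Primes"
begin

text \<open>Dirichlet coefficients of the standard L-function attached to a family of local
  (Satake) parameters: alpha p j is the j-th parameter (0 <= j < m) at the prime p, and
  lambda m alpha n = prod over p^nu || n of the complete homogeneous symmetric polynomial
  of degree nu in alpha p 0, ..., alpha p (m-1).\<close>

definition exps :: "nat \<Rightarrow> nat \<Rightarrow> (nat \<Rightarrow> nat) set" where
  "exps m \<nu> = {e. (\<forall>j. m \<le> j \<longrightarrow> e j = 0) \<and> (\<Sum>j<m. e j) = \<nu>}"

definition lambda_coeff :: "nat \<Rightarrow> (nat \<Rightarrow> nat \<Rightarrow> complex) \<Rightarrow> nat \<Rightarrow> complex" where
  "lambda_coeff m \<alpha> n =
     (\<Prod>p\<in>prime_factors n. \<Sum>e\<in>exps m (multiplicity p n). \<Prod>j<m. \<alpha> p j ^ e j)"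

end

theory Submission
  imports Defs "HOL-Computational_Algebra.Formal_Power_Series" "HOL-Library.FuncSet"
begin

unbundle no vec_syntax
notation fps_nth (infixl \<open>$\<close> 75)

lemma exps_finite: "finite (exps m k)"
proof -
  have "restrict e {..<m} \<in> PiE {..<m} (\<lambda>_. {0..k})" if "e \<in> exps m k" for e
  proof -
    have ek: "e j \<le> k" if "j < m" for j
    proof -
      have "e j \<le> (\<Sum>i<m. e i)" using that by (intro member_le_sum) auto
      thus ?thesis using \<open>e \<in> exps m k\<close> by (simp add: exps_def)
    qed
    thus ?thesis by (simp add: restrict_PiE_iff)
  qed
  hence sub: "(\<lambda>e. restrict e {..<m}) ` exps m k \<subseteq> PiE {..<m} (\<lambda>_. {0..k})" by (rule image_subsetI)
  have inj: "inj_on (\<lambda>e. restrict e {..<m}) (exps m k)"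
  proof (rule inj_onI)
    fix x y assume x: "x \<in> exps m k" and y: "y \<in> exps m k"
      and r: "restrict x {..<m} = restrict y {..<m}"
    show "x = y"
    proof
      fix j show "x j = y j"
      proof (cases "j < m")
        case True thus ?thesis using fun_cong[OF r, of j] by simp
      next
        case False thus ?thesis using x y by (simp add: exps_def)
      qed
    qed
  qed
  have "finite ((\<lambda>e. restrict e {..<m}) ` exps m k)"
    by (rule finite_subset[OF sub]) (intro finite_PiE; simp)
  thus ?thesis using inj by (rule finite_imageD)
qed

lemma prod_geom_nth:
  fixes a :: "nat \<Rightarrow> complex"
  shows "(\<Prod>j<m. Abs_fps (\<lambda>n. a j ^ n)) $ k = (\<Sum>e\<in>exps m k. \<Prod>j<m. a j ^ e j)"
proof (induction m arbitrary: k)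
  case 0
  have "exps 0 k = (if k = 0 then {\<lambda>_. 0} else {})" by (auto simp: exps_def)
  thus ?case by simp
next
  case (Suc m)
  have "(\<Prod>j<Suc m. Abs_fps (\<lambda>n. a j ^ n)) $ k
      = (\<Sum>i=0..k. (\<Prod>j<m. Abs_fps (\<lambda>n. a j ^ n)) $ i * a m ^ (k - i))"
    by (simp add: fps_mult_nth)
  also have "\<dots> = (\<Sum>i=0..k. \<Sum>e\<in>exps m i. (\<Prod>j<m. a j ^ e j) * a m ^ (k - i))"
    by (simp add: Suc.IH sum_distrib_right)
  also have "\<dots> = (\<Sum>(i,e)\<in>Sigma {0..k} (exps m). (\<Prod>j<m. a j ^ e j) * a m ^ (k - i))"
    by (rule sum.Sigma) (auto simp: exps_finite)
  also have "\<dots> = (\<Sum>e\<in>exps (Suc m) k. \<Prod>j<Suc m. a j ^ e j)"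
  proof (rule sum.reindex_bij_witness[where i = "\<lambda>e. (k - e m, e(m := 0))" and j = "\<lambda>(i,e). e(m := k - i)"])
    fix ie assume "ie \<in> Sigma {0..k} (exps m)"
    then obtain i e where ie: "ie = (i,e)" "i \<le> k" "e \<in> exps m i" by auto
    hence em: "e m = 0" by (simp add: exps_def)
    have s: "(\<Sum>j<m. (e(m := k - i)) j) = i" using ie(3) by (simp add: exps_def)
    show "(\<lambda>e. (k - e m, e(m := 0))) ((\<lambda>(i,e). e(m := k - i)) ie) = ie"
      using ie em by (auto simp: fun_eq_iff)
    show "(\<lambda>(i,e). e(m := k - i)) ie \<in> exps (Suc m) k"
      using ie s unfolding exps_def by auto
    have p: "(\<Prod>j<m. a j ^ (e(m := k - i)) j) = (\<Prod>j<m. a j ^ e j)"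
      by (rule prod.cong) auto
    show "(\<Prod>j<Suc m. a j ^ ((\<lambda>(i,e). e(m := k - i)) ie) j) = (case ie of (i,e) \<Rightarrow> (\<Prod>j<m. a j ^ e j) * a m ^ (k - i))"
      using ie p by simp
  next
    fix e assume e: "e \<in> exps (Suc m) k"
    hence s: "(\<Sum>j<m. e j) + e m = k" by (simp add: exps_def)
    have s2: "(\<Sum>j<m. (e(m:=0)) j) = (\<Sum>j<m. e j)" by (rule sum.cong) auto
    show "(\<lambda>(i,e). e(m := k - i)) (k - e m, e(m := 0)) = e"
      using s by (auto simp: fun_eq_iff)
    show "(k - e m, e(m := 0)) \<in> Sigma {0..k} (exps m)"
      using e s s2 unfolding exps_def by auto
  qed
  finally show ?case .
qed

lemma geom_inv:
  fixes c :: complex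
  shows "Abs_fps (\<lambda>n. c ^ n) * (1 - fps_const c * fps_X) = 1"
proof (rule fps_ext)
  fix n
  have "Abs_fps (\<lambda>n. c ^ n) * (1 - fps_const c * fps_X) =
        Abs_fps (\<lambda>n. c ^ n) - fps_const c * (fps_X * Abs_fps (\<lambda>n. c ^ n))"
    by (simp add: right_diff_distrib left_diff_distrib ac_simps)
  thus "(Abs_fps (\<lambda>n. c ^ n) * (1 - fps_const c * fps_X)) $ n = (1::complex fps) $ n"
    by (cases n) (simp_all add: fps_mult_left_const_nth)
qed
lemma poly_nth:
  fixes a :: "nat \<Rightarrow> complex"
  shows "(\<Prod>j<m. (1 - fps_const (a j) * fps_X)) $ 0 = 1 \<and>
         (\<forall>k>m. (\<Prod>j<m. (1 - fps_const (a j) * fps_X)) $ k = 0) \<and>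
         (\<Prod>j<m. (1 - fps_const (a j) * fps_X)) $ m = (-1) ^ m * (\<Prod>j<m. a j)"
proof (induction m)
  case 0
  then show ?case by simp
next
  case (Suc m)
  define P where "P = (\<Prod>j<m. (1 - fps_const (a j) * fps_X))"
  have eq: "(\<Prod>j<Suc m. (1 - fps_const (a j) * fps_X)) = P - fps_const (a m) * (fps_X * P)"
    unfolding P_def by (simp add: right_diff_distrib left_diff_distrib ac_simps)
  have n: "(\<Prod>j<Suc m. (1 - fps_const (a j) * fps_X)) $ k = P $ k - a m * (if k = 0 then 0 else P $ (k - 1))" for k
    unfolding eq by (simp add: fps_mult_left_const_nth)
  show ?case using Suc unfolding n P_def[symmetric] by auto
qed

theorem lemma4p12:
  fixes m p :: nat and \<alpha> :: "nat \<Rightarrow> nat \<Rightarrow> complex"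
  assumes "m \<ge> 2" and "prime p"
    and "cmod (\<Prod>j<m. \<alpha> p j) = 1"
  shows "(\<Sum>k=1..m. cmod (lambda_coeff m \<alpha> (p ^ k))) \<ge> 1 / real m"
proof -
  define a where "a = \<alpha> p"
  define H where "H = (\<Prod>j<m. Abs_fps (\<lambda>n. a j ^ n))"
  define P where "P = (\<Prod>j<m. (1 - fps_const (a j) * fps_X))"
  have lam: "lambda_coeff m \<alpha> (p ^ k) = H $ k" if "k \<ge> 1" for k
  proof -
    have "prime_factors (p ^ k) = {p}" using assms(2) that
      by (simp add: prime_factorization_prime_power)
    moreover have "multiplicity p (p ^ k) = k" using assms(2) by simp
    ultimately show ?thesis by (simp add: lambda_coeff_def H_def prod_geom_nth a_def)
  qed
  have HP: "H * P = 1"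
    unfolding H_def P_def prod.distrib[symmetric] by (simp add: geom_inv)
  have P0: "P $ 0 = 1" and Pm: "P $ m = (-1) ^ m * (\<Prod>j<m. a j)"
    using poly_nth[where m=m and a=a] by (auto simp: P_def)
  define S where "S = (\<Sum>k=1..m. cmod (H $ k))"
  have S_eq: "(\<Sum>k=1..m. cmod (lambda_coeff m \<alpha> (p ^ k))) = S"
    unfolding S_def by (rule sum.cong) (auto simp: lam)
  have "S \<ge> 1"
  proof (rule ccontr)
    assume "\<not> S \<ge> 1"
    hence S1: "S < 1" by simp
    have rec: "P $ n = - (\<Sum>i=1..n. H $ i * P $ (n - i))" if "n \<ge> 1" for n
    proof -
      have "(H * P) $ n = 0" using HP that by simp
      hence "(\<Sum>i=0..n. H $ i * P $ (n - i)) = 0" by (simp add: fps_mult_nth)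
      moreover have "(\<Sum>i=0..n. H $ i * P $ (n - i)) = H $ 0 * P $ n + (\<Sum>i=1..n. H $ i * P $ (n - i))"
        using that by (simp add: sum.atLeast_Suc_atMost)
      moreover have "H $ 0 = 1" using HP P0 by (metis fps_mult_nth_0 fps_one_nth mult.right_neutral)
      ultimately show ?thesis by (simp add: eq_neg_iff_add_eq_0 add.commute)
    qed
    have bnd: "n \<le> m \<longrightarrow> n \<ge> 1 \<longrightarrow> cmod (P $ n) \<le> S" for n
    proof (induction n rule: less_induct)
      case (less n)
      show ?case
      proof (intro impI)
        assume nm: "n \<le> m" and n1: "n \<ge> 1"
        have "cmod (P $ n) \<le> (\<Sum>i=1..n. cmod (H $ i * P $ (n - i)))"
          unfolding rec[OF n1] norm_minus_cancel by (rule norm_sum)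
        also have "\<dots> \<le> (\<Sum>i=1..n. cmod (H $ i))"
        proof (rule sum_mono)
          fix i assume i: "i \<in> {1..n}"
          have "cmod (P $ (n - i)) \<le> 1"
          proof (cases "n - i = 0")
            case True thus ?thesis using P0 by simp
          next
            case False thus ?thesis using less.IH[of "n - i"] i nm S1 by auto
          qed
          thus "cmod (H $ i * P $ (n - i)) \<le> cmod (H $ i)"
            by (simp add: norm_mult mult_left_le)
        qed
        also have "\<dots> \<le> S" unfolding S_def using nm
          by (intro sum_mono2) auto
        finally show "cmod (P $ n) \<le> S" .
      qed
    qed
    have "cmod (P $ m) = 1" using Pm assms(3) by (simp add: a_def norm_mult norm_power)
    thus False using bnd[of m] assms(1) S1 by auto
  qed
  moreover have "1 / real m \<le> 1" using assms(1) by simp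
  ultimately show ?thesis using S_eq by linarith
qed

end
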